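(* Let $n\in\mathbb{N}$, $n\ge1$. Let $H_n=\{0,1\}^n$ with the $\ell_1$ metric $d$, enumerated as $H_n=\{b_{n,i}:i=0,1,\ldots,2^n-1\}$ where $b_{n,i}$ is the $n$-digit binary representation of $i$ (most significant digit first). Let $D_n=[d(b_{n,i},b_{n,j})]_{0\le i,j\le 2^n-1}$ and let $O_n$ be the $2^n\times 2^n$ all-ones matrix. For $0\le j\le i$, let $\mathbb{1}_{i,j}\in\mathbb{R}^{2^i}$ be the vector whose first $2^j$ coordinates equal $1$, the next $2^j$ coordinates equal $-1$, the next $2^j$ equal $1$, and so on alternately. Let $A_n$ be the $(n+1)\times 2^n$ matrix with rows $\mathbb{1}_{n,n}^T,\mathbb{1}_{n,n-1}^T,\ldots,\mathbb{1}_{n,0}^T$. Then: (1) $D_1=\begin{bmatrix}0&1\\1&0\end{bmatrix}$ and $D_{n+1}=\begin{bmatrix}D_n & D_n+O_n\\ D_n+O_n & D_n\end{bmatrix}$. (2) $D_n\mathbb{1}_{n,n}=n2^{n-1}\mathbb{1}_{n,n}$ and $D_n\mathbb{1}_{n,i}=-2^{n-1}\mathbb{1}_{n,i}$ for all $i=0,1,\ldots,n-1$. (3) With $V_n=\operatorname{Span}\{\mathbb{1}_{n,i}:i=0,1,\ldots,n\}$, the column space of $D_n$ equals $V_n$. (4) $N(A_n)=N(D_n)=V_n^\perp$, where $N(\cdot)$ denotes the null space. *)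

theory Defs
  imports "Jordan_Normal_Form.VS_Connect" "Jordan_Normal_Form.Matrix_Kernel"
begin

(* k-th binary digit (k = 0 is the most significant one) of the n-digit
   binary representation b_{n,i} of i *)
definition bdigit :: "nat \<Rightarrow> nat \<Rightarrow> nat \<Rightarrow> nat" where
  "bdigit n i k = (i div 2 ^ (n - 1 - k)) mod 2"

definition hdist :: "nat \<Rightarrow> nat \<Rightarrow> nat \<Rightarrow> real" where
  "hdist n i j = (\<Sum>k<n. \<bar>real (bdigit n i k) - real (bdigit n j k)\<bar>)"

definition Dmat :: "nat \<Rightarrow> real mat" where
  "Dmat n = mat (2 ^ n) (2 ^ n) (\<lambda>(i, j). hdist n i j)"

definition Omat :: "nat \<Rightarrow> real mat" where
  "Omat n = mat (2 ^ n) (2 ^ n) (\<lambda>_. 1)"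

definition altvec :: "nat \<Rightarrow> nat \<Rightarrow> real vec" where
  "altvec i j = vec (2 ^ i) (\<lambda>k. if even (k div 2 ^ j) then 1 else -1)"

definition Amat :: "nat \<Rightarrow> real mat" where
  "Amat n = mat (n + 1) (2 ^ n) (\<lambda>(r, c). altvec n (n - r) $ c)"

definition Vspace :: "nat \<Rightarrow> real vec set" where
  "Vspace n = LinearCombinations.module.span class_ring (module_vec TYPE(real) (2 ^ n)) ((\<lambda>i. altvec n i) ` {0..n})"

end

theory Submission
  imports Defs
begin

definition sg :: "nat \<Rightarrow> nat \<Rightarrow> real" where
  "sg m k = (if even (k div 2 ^ m) then 1 else -1)"

definition cf :: "nat \<Rightarrow> nat \<Rightarrow> real" where
  "cf n p = (if p = n then real n / 2 else - 1 / 2)"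

lemma sg_bit: "sg m k = (if bit k m then -1 else 1)"
  by (simp add: sg_def bit_nat_def)

lemma sg_sq: "sg m k * sg m k = 1"
  by (simp add: sg_def)

lemma flip_flip: "flip_bit p (flip_bit p (k::nat)) = k"
  by (rule bit_eqI) (auto simp: bit_flip_bit_iff)

lemma flip_lt: assumes "(k::nat) < 2 ^ n" "p < n" shows "flip_bit p k < 2 ^ n"
proof -
  have "take_bit n (flip_bit p k) = flip_bit p k"
    using assms by (simp add: take_bit_flip_bit_eq take_bit_nat_eq_self)
  thus ?thesis by (simp add: take_bit_nat_eq_self_iff[symmetric])
qed

lemma sg_flip: "sg q (flip_bit p k) = (if q = p then - sg q k else sg q k)"
  by (auto simp: sg_bit bit_flip_bit_iff)

lemma orth_lt:
  assumes "p < q" "q \<le> n"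
  shows "(\<Sum>k<2^n. sg p k * sg q k) = 0"
proof -
  have pn: "p < n" using assms by auto
  have "(\<Sum>k<2^n. sg p k * sg q k) = (\<Sum>k<2^n. sg p (flip_bit p k) * sg q (flip_bit p k))"
    by (rule sum.reindex_bij_witness[of _ "flip_bit p" "flip_bit p"])
       (auto simp: flip_flip flip_lt pn)
  also have "\<dots> = - (\<Sum>k<2^n. sg p k * sg q k)"
    using assms by (simp add: sg_flip sum_negf[symmetric])
  finally show ?thesis by simp
qed

lemma orth:
  assumes "p \<le> n" "q \<le> n"
  shows "(\<Sum>k<2^n. sg p k * sg q k) = (if p = q then 2 ^ n else 0)"
proof (cases "p = q")
  case True thus ?thesis by (simp add: sg_sq)
next
  case False
  then consider "p < q" | "q < p" by linarith
  thus ?thesis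
  proof cases
    case 1 thus ?thesis using orth_lt assms False by simp
  next
    case 2 thus ?thesis using orth_lt[of q p n] assms False by (simp add: mult.commute)
  qed
qed

definition dig :: "nat \<Rightarrow> nat \<Rightarrow> nat" where
  "dig m k = (k div 2 ^ m) mod 2"

lemma hdist_dig: "hdist n i j = (\<Sum>m<n. \<bar>real (dig m i) - real (dig m j)\<bar>)"
proof -
  have "hdist n i j = (\<Sum>k<n. \<bar>real (dig (n - 1 - k) i) - real (dig (n - 1 - k) j)\<bar>)"
    by (simp add: hdist_def bdigit_def dig_def)
  also have "\<dots> = (\<Sum>m<n. \<bar>real (dig m i) - real (dig m j)\<bar>)"
    by (rule sum.reindex_bij_witness[of _ "\<lambda>m. n - 1 - m" "\<lambda>m. n - 1 - m"]) auto
  finally show ?thesis .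
qed

lemma dig_sg: "\<bar>real (dig m i) - real (dig m j)\<bar> = (1 - sg m i * sg m j) / 2"
  by (auto simp: dig_def sg_def elim!: evenE oddE)

lemma sg_top: "i < 2 ^ n \<Longrightarrow> sg n i = 1"
  by (simp add: sg_def)

lemma hdist_sg:
  assumes "i < 2 ^ n" "j < 2 ^ n"
  shows "hdist n i j = (\<Sum>p\<le>n. cf n p * sg p i * sg p j)"
proof -
  have "hdist n i j = (\<Sum>m<n. (1 - sg m i * sg m j) / 2)"
    by (simp add: hdist_dig dig_sg)
  also have "\<dots> = real n / 2 + (\<Sum>m<n. cf n m * sg m i * sg m j)"
    by (simp add: cf_def sum_divide_distrib[symmetric] sum_subtractf diff_divide_distrib
        sum_negf)
  also have "\<dots> = (\<Sum>p\<le>n. cf n p * sg p i * sg p j)"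
    using assms by (simp add: lessThan_Suc_atMost[symmetric] sg_top cf_def)
  finally show ?thesis .
qed


lemma altvec_idx[simp]: "k < 2 ^ n \<Longrightarrow> altvec n p $ k = sg p k"
  unfolding altvec_def sg_def by (rule index_vec)

lemma altvec_dim[simp]: "dim_vec (altvec n p) = 2 ^ n"
  unfolding altvec_def by (rule dim_vec)

lemma altvec_carrier[simp]: "altvec n p \<in> carrier_vec (2 ^ n)"
  by (rule carrier_vecI) (rule altvec_dim)

lemma Dmat_carrier[simp]: "Dmat n \<in> carrier_mat (2 ^ n) (2 ^ n)"
  unfolding Dmat_def by (rule mat_carrier)

lemma altvec_sprod: "dim_vec x = 2 ^ n \<Longrightarrow> altvec n p \<bullet> x = (\<Sum>j<2^n. sg p j * x $ j)"
  by (simp add: scalar_prod_def atLeast0LessThan)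

lemma Dmat_dims[simp]: "dim_row (Dmat n) = 2 ^ n" "dim_col (Dmat n) = 2 ^ n"
  using carrier_matD[OF Dmat_carrier] by blast+

lemma Dmat_idx: "i < 2 ^ n \<Longrightarrow> j < 2 ^ n \<Longrightarrow> Dmat n $$ (i, j) = hdist n i j"
  unfolding Dmat_def by (subst index_mat(1)) auto

lemma rc: "a * b * c = a * c * (b::real)" by simp
lemma rc2: "a * (b * c) = b * (a * (c::real))" by simp

lemma Dmul:
  assumes x: "x \<in> carrier_vec (2 ^ n)"
  shows "Dmat n *\<^sub>v x = vec (2 ^ n) (\<lambda>i. \<Sum>p\<le>n. cf n p * (altvec n p \<bullet> x) * sg p i)"
proof (rule eq_vecI)
  fix i assume "i < dim_vec (vec (2 ^ n) (\<lambda>i. \<Sum>p\<le>n. cf n p * (altvec n p \<bullet> x) * sg p i))"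
  hence i: "i < 2 ^ n" by simp
  have dx: "dim_vec x = 2 ^ n" using x by (rule carrier_vecD)
  have "(Dmat n *\<^sub>v x) $ i = (\<Sum>j\<in>{0..<2^n}. row (Dmat n) i $ j * x $ j)"
    using i by (simp add: scalar_prod_def dx)
  also have "\<dots> = (\<Sum>j<2^n. hdist n i j * x $ j)"
    unfolding atLeast0LessThan using i by (intro sum.cong refl) (simp add: Dmat_idx)
  also have "\<dots> = (\<Sum>j<2^n. \<Sum>p\<le>n. cf n p * sg p i * (sg p j * x $ j))"
    using i by (simp add: hdist_sg sum_distrib_right mult.assoc)
  also have "\<dots> = (\<Sum>p\<le>n. \<Sum>j<2^n. cf n p * sg p i * (sg p j * x $ j))"
    by (rule sum.swap)
  also have "\<dots> = (\<Sum>p\<le>n. cf n p * sg p i * (\<Sum>j<2^n. sg p j * x $ j))"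
    by (simp add: sum_distrib_left)
  also have "\<dots> = (\<Sum>p\<le>n. cf n p * (\<Sum>j<2^n. sg p j * x $ j) * sg p i)"
    by (rule sum.cong[OF refl]) (rule rc)
  also have "\<dots> = (\<Sum>p\<le>n. cf n p * (altvec n p \<bullet> x) * sg p i)"
    using x by (simp only: altvec_sprod[OF carrier_vecD[OF x]])
  finally show "(Dmat n *\<^sub>v x) $ i = vec (2 ^ n) (\<lambda>i. \<Sum>p\<le>n. cf n p * (altvec n p \<bullet> x) * sg p i) $ i"
    using i by simp
qed simp

lemma sprod_comb:
  assumes q: "q \<le> n"
  shows "altvec n q \<bullet> vec (2 ^ n) (\<lambda>i. \<Sum>p\<le>n. f p * sg p i) = 2 ^ n * f q"
proof -
  have "altvec n q \<bullet> vec (2 ^ n) (\<lambda>i. \<Sum>p\<le>n. f p * sg p i)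
      = (\<Sum>i<2^n. sg q i * (\<Sum>p\<le>n. f p * sg p i))"
    by (simp add: altvec_sprod)
  also have "\<dots> = (\<Sum>i<2^n. \<Sum>p\<le>n. f p * (sg q i * sg p i))"
    by (simp only: sum_distrib_left) (intro sum.cong refl, rule rc2)
  also have "\<dots> = (\<Sum>p\<le>n. \<Sum>i<2^n. f p * (sg q i * sg p i))"
    by (rule sum.swap)
  also have "\<dots> = (\<Sum>p\<le>n. f p * (\<Sum>i<2^n. sg q i * sg p i))"
    by (simp only: sum_distrib_left)
  also have "\<dots> = (\<Sum>p\<le>n. f p * (if q = p then 2 ^ n else 0))"
    using q by (intro sum.cong) (auto simp: orth)
  also have "\<dots> = (\<Sum>p\<le>n. if q = p then 2 ^ n * f q else 0)"
    by (intro sum.cong refl) simp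
  also have "\<dots> = 2 ^ n * f q"
    using q by simp
  finally show ?thesis .
qed

lemma altvec_orth: "p \<le> n \<Longrightarrow> q \<le> n \<Longrightarrow> altvec n p \<bullet> altvec n q = (if p = q then 2 ^ n else 0)"
  by (simp add: altvec_sprod orth)

lemma eigen:
  assumes q: "q \<le> n"
  shows "Dmat n *\<^sub>v altvec n q = (cf n q * 2 ^ n) \<cdot>\<^sub>v altvec n q"
proof -
  have "Dmat n *\<^sub>v altvec n q = vec (2 ^ n) (\<lambda>i. \<Sum>p\<le>n. cf n p * (altvec n p \<bullet> altvec n q) * sg p i)"
    by (rule Dmul) (rule altvec_carrier)
  also have "\<dots> = vec (2 ^ n) (\<lambda>i. cf n q * 2 ^ n * sg q i)"
  proof (rule eq_vecI)
    fix i
    have "(\<Sum>p\<le>n. cf n p * (altvec n p \<bullet> altvec n q) * sg p i)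
        = (\<Sum>p\<le>n. (if q = p then cf n q * 2 ^ n * sg q i else 0))"
      using q by (intro sum.cong refl) (auto simp: altvec_orth)
    also have "\<dots> = cf n q * 2 ^ n * sg q i" using q by simp
    finally show "vec (2 ^ n) (\<lambda>i. \<Sum>p\<le>n. cf n p * (altvec n p \<bullet> altvec n q) * sg p i) $ i
       = vec (2 ^ n) (\<lambda>i. cf n q * 2 ^ n * sg q i) $ i"
      if "i < dim_vec (vec (2 ^ n) (\<lambda>i. cf n q * 2 ^ n * sg q i))" using that by simp
  qed simp
  also have "\<dots> = (cf n q * 2 ^ n) \<cdot>\<^sub>v altvec n q"
    by (rule eq_vecI) simp_all
  finally show ?thesis .
qed


lemma dig_bit: "dig m k = (if bit k m then 1 else 0)"
  unfolding dig_def bit_nat_def mod2_eq_if by simp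

lemma dig_mod: assumes "m < n" shows "dig m (k mod 2 ^ n) = dig m k"
proof -
  have "bit (k mod 2 ^ n) m = bit (take_bit n k) m" by (simp only: take_bit_eq_mod)
  also have "\<dots> = bit k m" using assms by (simp only: bit_take_bit_iff) simp
  finally show ?thesis by (simp only: dig_bit)
qed

lemma dig_top:
  assumes "(k::nat) < 2 ^ (n + 1)"
  shows "dig n k = (if k < 2 ^ n then 0 else 1)"
proof -
  have lt: "k div 2 ^ n < 2" using assms by (simp add: div_less_iff_less_mult)
  show ?thesis
  proof (cases "k < 2 ^ n")
    case True thus ?thesis by (simp add: dig_def)
  next
    case False
    hence "0 < k div 2 ^ n" by (simp add: div_greater_zero_iff)
    with lt have "k div 2 ^ n = 1" by linarith
    thus ?thesis using False by (simp add: dig_def)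
  qed
qed

lemma hblock:
  assumes "i < 2 ^ (n + 1)" "j < 2 ^ (n + 1)"
  shows "hdist (n + 1) i j = hdist n (i mod 2 ^ n) (j mod 2 ^ n) + (if (i < 2 ^ n) = (j < 2 ^ n) then 0 else 1)"
proof -
  have "hdist (n + 1) i j = (\<Sum>m<n. \<bar>real (dig m i) - real (dig m j)\<bar>) + \<bar>real (dig n i) - real (dig n j)\<bar>"
    by (simp add: hdist_dig)
  also have "(\<Sum>m<n. \<bar>real (dig m i) - real (dig m j)\<bar>) = hdist n (i mod 2 ^ n) (j mod 2 ^ n)"
    by (simp add: hdist_dig dig_mod)
  also have "\<bar>real (dig n i) - real (dig n j)\<bar> = (if (i < 2 ^ n) = (j < 2 ^ n) then 0 else 1)"
    using assms by (simp add: dig_top)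
  finally show ?thesis .
qed

lemma modsub: "2 ^ n \<le> (j::nat) \<Longrightarrow> j < 2 ^ (n + 1) \<Longrightarrow> j mod 2 ^ n = j - 2 ^ n"
  by (simp add: le_mod_geq)

lemma Omat_dims[simp]: "dim_row (Omat n) = 2 ^ n" "dim_col (Omat n) = 2 ^ n"
  unfolding Omat_def by (rule dim_row_mat, rule dim_col_mat)

lemma Omat_idx: "i < 2 ^ n \<Longrightarrow> j < 2 ^ n \<Longrightarrow> Omat n $$ (i, j) = 1"
  unfolding Omat_def by (subst index_mat(1)) auto

lemma part2: "Dmat (n + 1) = four_block_mat (Dmat n) (Dmat n + Omat n) (Dmat n + Omat n) (Dmat n)"
proof (rule eq_matI)
  fix i j assume "i < dim_row (four_block_mat (Dmat n) (Dmat n + Omat n) (Dmat n + Omat n) (Dmat n))"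
    "j < dim_col (four_block_mat (Dmat n) (Dmat n + Omat n) (Dmat n + Omat n) (Dmat n))"
  hence i: "i < 2 ^ (n + 1)" and j: "j < 2 ^ (n + 1)" by simp_all
  have L: "Dmat (n + 1) $$ (i, j) = hdist (n + 1) i j"
    using i j by (rule Dmat_idx)
  have dims: "i < dim_row (Dmat n) + dim_row (Dmat n)" "j < dim_col (Dmat n) + dim_col (Dmat n)"
    using i j by simp_all
  show "Dmat (n + 1) $$ (i, j) = four_block_mat (Dmat n) (Dmat n + Omat n) (Dmat n + Omat n) (Dmat n) $$ (i, j)"
    unfolding L hblock[OF i j] index_mat_four_block(1)[OF dims] using i j
    by (auto simp: Dmat_idx Omat_idx modsub)
qed simp_all

lemma hdist1: "hdist 1 i j = \<bar>real (i mod 2) - real (j mod 2)\<bar>"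
  by (simp add: hdist_def bdigit_def)

lemma part1: "Dmat 1 = mat_of_rows_list 2 [[0, 1], [1, 0]]"
proof (rule eq_matI)
  fix i j assume "i < dim_row (mat_of_rows_list 2 [[0::real, 1], [1, 0]])"
    "j < dim_col (mat_of_rows_list 2 [[0::real, 1], [1, 0]])"
  hence ij: "i < 2" "j < 2" by (simp_all add: mat_of_rows_list_def)
  hence "Dmat 1 $$ (i, j) = hdist 1 i j" by (intro Dmat_idx) simp_all
  moreover have "mat_of_rows_list 2 [[0::real, 1], [1, 0]] $$ (i, j) = [[0::real, 1], [1, 0]] ! i ! j"
    using ij by (simp add: mat_of_rows_list_def)
  moreover have "(i = 0 \<or> i = 1) \<and> (j = 0 \<or> j = 1)" using ij by auto
  ultimately show "Dmat 1 $$ (i, j) = mat_of_rows_list 2 [[0, 1], [1, 0]] $$ (i, j)"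
    by (auto simp: hdist_def bdigit_def)
qed (simp_all add: mat_of_rows_list_def)

lemma span_comb:
  fixes g :: "nat \<Rightarrow> real"
  shows "m \<le> Suc n \<Longrightarrow> vec (2 ^ n) (\<lambda>i. \<Sum>p<m. g p * sg p i) \<in> Vspace n"
proof (induction m)
  interpret V: vec_space "TYPE(real)" "2 ^ n" .
  have Vspace_span: "Vspace n = V.span (altvec n ` {0..n})" unfolding Vspace_def ..
  have Ssub: "altvec n ` {0..n} \<subseteq> carrier_vec (2 ^ n)" by auto
  {
    case 0
    have "vec (2 ^ n) (\<lambda>i. \<Sum>p<0. g p * sg p i) = 0\<^sub>v (2 ^ n)" by (rule eq_vecI) simp_all
    thus ?case using V.span_zero unfolding Vspace_span by simp
  next
    case (Suc m)
    hence IH: "vec (2 ^ n) (\<lambda>i. \<Sum>p<m. g p * sg p i) \<in> V.span (altvec n ` {0..n})"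
      unfolding Vspace_span by simp
    have mem: "altvec n m \<in> altvec n ` {0..n}" using Suc.prems by auto
    have sm: "g m \<cdot>\<^sub>v altvec n m \<in> V.span (altvec n ` {0..n})"
      by (rule V.smult_in_span[OF Ssub V.span_mem[OF Ssub mem]])
    have eq: "vec (2 ^ n) (\<lambda>i. \<Sum>p<Suc m. g p * sg p i)
        = vec (2 ^ n) (\<lambda>i. \<Sum>p<m. g p * sg p i) + g m \<cdot>\<^sub>v altvec n m"
      by (rule eq_vecI) simp_all
    show ?case unfolding Vspace_span eq
      using V.span_add1[OF Ssub IH sm] by simp
  }
qed

lemma cfnz: "1 \<le> n \<Longrightarrow> cf n q \<noteq> 0"
  by (simp add: cf_def)

lemma Dmul_comb:
  assumes x: "x \<in> carrier_vec (2 ^ n)"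
  shows "Dmat n *\<^sub>v x = vec (2 ^ n) (\<lambda>i. \<Sum>p<Suc n. (cf n p * (altvec n p \<bullet> x)) * sg p i)"
  unfolding Dmul[OF x] lessThan_Suc_atMost ..

lemma kerD:
  assumes n: "1 \<le> n"
  shows "mat_kernel (Dmat n) = {x \<in> carrier_vec (2 ^ n). \<forall>p\<le>n. altvec n p \<bullet> x = 0}"
proof (intro Set.set_eqI iffI)
  fix x assume "x \<in> mat_kernel (Dmat n)"
  hence x: "x \<in> carrier_vec (2 ^ n)" and D0: "Dmat n *\<^sub>v x = 0\<^sub>v (2 ^ n)"
    by (auto simp: mat_kernel_def)
  have "altvec n q \<bullet> x = 0" if q: "q \<le> n" for q
  proof -
    have "0 = altvec n q \<bullet> (Dmat n *\<^sub>v x)" unfolding D0 by simp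
    also have "\<dots> = 2 ^ n * (cf n q * (altvec n q \<bullet> x))"
      unfolding Dmul[OF x] by (rule sprod_comb[OF q])
    finally show ?thesis using cfnz[OF n, of q] by simp
  qed
  thus "x \<in> {x \<in> carrier_vec (2 ^ n). \<forall>p\<le>n. altvec n p \<bullet> x = 0}" using x by auto
next
  fix x assume "x \<in> {x \<in> carrier_vec (2 ^ n). \<forall>p\<le>n. altvec n p \<bullet> x = 0}"
  hence x: "x \<in> carrier_vec (2 ^ n)" and z: "\<And>p. p \<le> n \<Longrightarrow> altvec n p \<bullet> x = 0" by auto
  have "Dmat n *\<^sub>v x = 0\<^sub>v (2 ^ n)"
    unfolding Dmul[OF x] by (rule eq_vecI) (simp_all add: z)
  thus "x \<in> mat_kernel (Dmat n)" using x by (simp add: mat_kernel_def)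
qed

lemma Amat_dims[simp]: "dim_row (Amat n) = n + 1" "dim_col (Amat n) = 2 ^ n"
  by (simp_all add: Amat_def)

lemma Amat_row: "r < n + 1 \<Longrightarrow> row (Amat n) r = altvec n (n - r)"
  by (rule eq_vecI) (simp_all add: Amat_def)

lemma kerA:
  "mat_kernel (Amat n) = {x \<in> carrier_vec (2 ^ n). \<forall>p\<le>n. altvec n p \<bullet> x = 0}"
proof (intro Set.set_eqI iffI)
  fix x assume "x \<in> mat_kernel (Amat n)"
  hence x: "x \<in> carrier_vec (2 ^ n)" and A0: "Amat n *\<^sub>v x = 0\<^sub>v (n + 1)"
    by (auto simp: mat_kernel_def)
  have "altvec n p \<bullet> x = 0" if p: "p \<le> n" for p
  proof -
    have r: "n - p < n + 1" by simp
    have "(Amat n *\<^sub>v x) $ (n - p) = 0" unfolding A0 using r by simp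
    thus ?thesis using r p by (simp add: Amat_row)
  qed
  thus "x \<in> {x \<in> carrier_vec (2 ^ n). \<forall>p\<le>n. altvec n p \<bullet> x = 0}" using x by auto
next
  fix x assume "x \<in> {x \<in> carrier_vec (2 ^ n). \<forall>p\<le>n. altvec n p \<bullet> x = 0}"
  hence x: "x \<in> carrier_vec (2 ^ n)" and z: "\<And>p. p \<le> n \<Longrightarrow> altvec n p \<bullet> x = 0" by auto
  have "Amat n *\<^sub>v x = 0\<^sub>v (n + 1)"
    by (rule eq_vecI) (simp_all add: Amat_row z)
  thus "x \<in> mat_kernel (Amat n)" using x by (simp add: mat_kernel_def)
qed

lemma orthV:
  "vec_module.orthogonal_complement (2 ^ n) (Vspace n) = {x \<in> carrier_vec (2 ^ n). \<forall>p\<le>n. altvec n p \<bullet> x = 0}"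
proof -
  interpret V: vec_space "TYPE(real)" "2 ^ n" .
  have Vspace_span: "Vspace n = V.span (altvec n ` {0..n})" unfolding Vspace_def ..
  have Ssub: "altvec n ` {0..n} \<subseteq> carrier_vec (2 ^ n)" by auto
  have "V.orthogonal_complement (Vspace n) = V.orthogonal_complement (altvec n ` {0..n})"
    unfolding Vspace_span by (rule V.in_orthogonal_complement_span[OF Ssub])
  also have "\<dots> = {x \<in> carrier_vec (2 ^ n). \<forall>p\<le>n. altvec n p \<bullet> x = 0}"
    unfolding V.orthogonal_complement_def
    by (auto simp: comm_scalar_prod[of _ "2 ^ n"])
  finally show ?thesis .
qed

lemma colspace:
  assumes n: "1 \<le> n"
  shows "vec_space.col_space (2 ^ n) (Dmat n) = Vspace n"
proof -
  interpret V: vec_space "TYPE(real)" "2 ^ n" .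
  have Vspace_span: "Vspace n = V.span (altvec n ` {0..n})" unfolding Vspace_def ..
  have Ssub: "altvec n ` {0..n} \<subseteq> carrier_vec (2 ^ n)" by auto
  have cs: "V.col_space (Dmat n) = {y \<in> carrier_vec (2 ^ n). \<exists>x\<in>carrier_vec (2 ^ n). Dmat n *\<^sub>v x = y}"
    using V.col_space_eq[OF Dmat_carrier] by simp
  show ?thesis
  proof
    show "V.col_space (Dmat n) \<subseteq> Vspace n"
    proof
      fix y assume "y \<in> V.col_space (Dmat n)"
      then obtain x where x: "x \<in> carrier_vec (2 ^ n)" and y: "y = Dmat n *\<^sub>v x"
        unfolding cs by auto
      show "y \<in> Vspace n" unfolding y Dmul_comb[OF x] by (rule span_comb) simp
    qed
  next
    have colsub: "set (cols (Dmat n)) \<subseteq> carrier_vec (2 ^ n)"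
      by (auto simp: cols_def)
    have "altvec n ` {0..n} \<subseteq> V.span (set (cols (Dmat n)))"
    proof
      fix v assume "v \<in> altvec n ` {0..n}"
      then obtain q where q: "q \<le> n" and v: "v = altvec n q" by auto
      define c where "c = cf n q * 2 ^ n"
      have c: "c \<noteq> 0" using cfnz[OF n, of q] by (simp add: c_def)
      have "Dmat n *\<^sub>v (inverse c \<cdot>\<^sub>v altvec n q) = inverse c \<cdot>\<^sub>v (Dmat n *\<^sub>v altvec n q)"
        by (rule mult_mat_vec[OF Dmat_carrier altvec_carrier])
      also have "\<dots> = altvec n q"
        unfolding eigen[OF q] c_def[symmetric] using c by (simp add: smult_smult_assoc)
      finally have "altvec n q \<in> V.col_space (Dmat n)"
        unfolding cs by (auto intro!: bexI[of _ "inverse c \<cdot>\<^sub>v altvec n q"])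
      thus "v \<in> V.span (set (cols (Dmat n)))" unfolding v V.col_space_def .
    qed
    from V.span_subsetI[OF colsub this]
    show "Vspace n \<subseteq> V.col_space (Dmat n)" unfolding Vspace_span V.col_space_def .
  qed
qed

theorem lemma4p1:
  fixes n :: nat
  assumes "n \<ge> 1"
  shows "Dmat 1 = mat_of_rows_list 2 [[0, 1], [1, 0]]
    \<and> Dmat (n + 1) = four_block_mat (Dmat n) (Dmat n + Omat n) (Dmat n + Omat n) (Dmat n)
    \<and> Dmat n *\<^sub>v altvec n n = (real n * 2 ^ (n - 1)) \<cdot>\<^sub>v altvec n n
    \<and> (\<forall>i < n. Dmat n *\<^sub>v altvec n i = (- (2 ^ (n - 1))) \<cdot>\<^sub>v altvec n i)
    \<and> vec_space.col_space (2 ^ n) (Dmat n) = Vspace n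
    \<and> mat_kernel (Amat n) = mat_kernel (Dmat n)
    \<and> mat_kernel (Dmat n) = vec_module.orthogonal_complement (2 ^ n) (Vspace n)"
proof -
  obtain m where m: "n = Suc m" using assms by (cases n) auto
  have e1: "cf n n * 2 ^ n = real n * 2 ^ (n - 1)"
    unfolding m by (simp add: cf_def)
  have e2: "cf n i * 2 ^ n = - (2 ^ (n - 1))" if "i < n" for i
    using that unfolding m by (simp add: cf_def)
  show ?thesis
    using part1 part2 eigen[of n n] eigen[of _ n] e1 e2 colspace[OF assms]
      kerA kerD[OF assms] orthV
    by simp
qed

end
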